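(* Let $\mathcal V$ be a variety with a difference term $d$, $A\in\mathcal V$, and $\alpha\in\operatorname{Con}A$ with $[\alpha,1_A]=0$. Let $r$ be an $\alpha$-trace, $B=A(\alpha)/\Delta_{\alpha1}$ with $x+y:=d^B(x,0,y)$ where $0$ is the $\Delta_{\alpha1}$-class of the diagonal, and $T_f(x_1/\alpha,\dots,x_n/\alpha)=\big(r(f(\bar x)),f(r(x_1),\dots,r(x_n))\big)/\Delta_{\alpha1}$ for each basic $f$ of arity $n$. Then $A\cong B\otimes^{T}A/\alpha$.
   Context: All algebras are in the sense of universal algebra. For $\alpha,\beta\in\operatorname{Con}A$, $[\alpha,\beta]$ is the term-condition (TC) commutator; $1_A$ is the total relation. $A(\alpha)=\{(x,y)\in A\times A:(x,y)\in\alpha\}$ is $\alpha$ viewed as a subalgebra of $A\times A$; $\Delta_{\alpha\beta}$ is the congruence of $A(\alpha)$ generated by $\{((u,u),(v,v)):(u,v)\in\beta\}$. An $\alpha$-trace is a map $r:A\to A$ with $(r(x),x)\in\alpha$ for all $x$ and $r(x)=r(y)$ whenever $(x,y)\in\alpha$. A difference term for $\mathcal V$ is a ternary term $d$ such that for every $A\in\mathcal V$, $\theta\in\operatorname{Con}A$, $(a,b)\in\theta$: $d(a,a,b)=b$ and $(d(a,b,b),a)\in[\theta,\theta]$. Given algebras $B,Q$ in the same signature $\tau$, a binary operation $+$ on $B$, and maps $T_f:Q^{\operatorname{ar}f}\to B$ ($f\in\tau$), the algebra $B\otimes^{T}Q$ has universe $B\times Q$ and operations $F_f((b_1,q_1),\dots,(b_n,q_n))=\big(f^B(b_1,\dots,b_n)+T_f(q_1,\dots,q_n),\,f^Q(q_1,\dots,q_n)\big)$.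 *)

theory Defs
  imports Main
begin

text \<open>An algebra is a carrier S :: 'a set together with an interpretation
F :: 'f => 'a list => 'a of the operation symbols (only meaningful on argument
lists of the right length with entries in S).\<close>

datatype ('f, 'v) trm = Var 'v | App 'f "('f, 'v) trm list"

fun eval :: "('f \<Rightarrow> 'a list \<Rightarrow> 'a) \<Rightarrow> ('v \<Rightarrow> 'a) \<Rightarrow> ('f, 'v) trm \<Rightarrow> 'a" where
  "eval F \<rho> (Var v) = \<rho> v"
| "eval F \<rho> (App f ts) = F f (map (eval F \<rho>) ts)"

fun wf_trm :: "('f \<Rightarrow> nat) \<Rightarrow> ('f, 'v) trm \<Rightarrow> bool" where
  "wf_trm ar (Var v) = True"
| "wf_trm ar (App f ts) = (length ts = ar f \<and> (\<forall>t\<in>set ts. wf_trm ar t))"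

fun tvars :: "('f, 'v) trm \<Rightarrow> 'v set" where
  "tvars (Var v) = {v}"
| "tvars (App f ts) = \<Union> (tvars ` set ts)"

definition is_alg :: "('f \<Rightarrow> nat) \<Rightarrow> 'a set \<Rightarrow> ('f \<Rightarrow> 'a list \<Rightarrow> 'a) \<Rightarrow> bool" where
  "is_alg ar S F \<longleftrightarrow> (\<forall>f xs. length xs = ar f \<longrightarrow> set xs \<subseteq> S \<longrightarrow> F f xs \<in> S)"

definition compatible :: "('f \<Rightarrow> nat) \<Rightarrow> ('f \<Rightarrow> 'a list \<Rightarrow> 'a) \<Rightarrow> 'a rel \<Rightarrow> bool" where
  "compatible ar F \<theta> \<longleftrightarrow> (\<forall>f xs ys. length xs = ar f \<longrightarrow> list_all2 (\<lambda>x y. (x, y) \<in> \<theta>) xs ys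
      \<longrightarrow> (F f xs, F f ys) \<in> \<theta>)"

definition congruence :: "('f \<Rightarrow> nat) \<Rightarrow> 'a set \<Rightarrow> ('f \<Rightarrow> 'a list \<Rightarrow> 'a) \<Rightarrow> 'a rel \<Rightarrow> bool" where
  "congruence ar S F \<theta> \<longleftrightarrow> equiv S \<theta> \<and> compatible ar F \<theta>"

text \<open>Term condition C(alpha, beta; delta): variables Inl i are the "x"-variables
(alpha-related), variables Inr j the "y"-variables (beta-related).\<close>
definition term_cond :: "('f \<Rightarrow> nat) \<Rightarrow> ('f \<Rightarrow> 'a list \<Rightarrow> 'a) \<Rightarrow> 'a rel \<Rightarrow> 'a rel \<Rightarrow> 'a rel \<Rightarrow> bool" where
  "term_cond ar F \<alpha> \<beta> \<delta> \<longleftrightarrow>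
     (\<forall>(t :: ('f, nat + nat) trm) a b u v.
        wf_trm ar t \<longrightarrow> (\<forall>i. (a i, b i) \<in> \<alpha>) \<longrightarrow> (\<forall>i. (u i, v i) \<in> \<beta>) \<longrightarrow>
        (eval F (case_sum a u) t, eval F (case_sum a v) t) \<in> \<delta> \<longrightarrow>
        (eval F (case_sum b u) t, eval F (case_sum b v) t) \<in> \<delta>)"

definition commutator :: "('f \<Rightarrow> nat) \<Rightarrow> 'a set \<Rightarrow> ('f \<Rightarrow> 'a list \<Rightarrow> 'a) \<Rightarrow> 'a rel \<Rightarrow> 'a rel \<Rightarrow> 'a rel" where
  "commutator ar S F \<alpha> \<beta> = \<Inter> {\<delta>. congruence ar S F \<delta> \<and> term_cond ar F \<alpha> \<beta> \<delta>}"

definition Cg :: "('f \<Rightarrow> nat) \<Rightarrow> 'a set \<Rightarrow> ('f \<Rightarrow> 'a list \<Rightarrow> 'a) \<Rightarrow> 'a rel \<Rightarrow> 'a rel" where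
  "Cg ar S F R = \<Inter> {\<theta>. congruence ar S F \<theta> \<and> R \<subseteq> \<theta>}"

text \<open>Operations of A(alpha), the subalgebra alpha of A x A.\<close>
definition pair_ops :: "('f \<Rightarrow> 'a list \<Rightarrow> 'a) \<Rightarrow> 'f \<Rightarrow> ('a \<times> 'a) list \<Rightarrow> 'a \<times> 'a" where
  "pair_ops F f ps = (F f (map fst ps), F f (map snd ps))"

definition Delta :: "('f \<Rightarrow> nat) \<Rightarrow> 'a set \<Rightarrow> ('f \<Rightarrow> 'a list \<Rightarrow> 'a) \<Rightarrow> 'a rel \<Rightarrow> 'a rel \<Rightarrow> ('a \<times> 'a) rel" where
  "Delta ar S F \<alpha> \<beta> = Cg ar \<alpha> (pair_ops F) {((u, u), (v, v)) | u v. (u, v) \<in> \<beta>}"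

definition rep :: "'a set \<Rightarrow> 'a" where
  "rep C = (SOME x. x \<in> C)"

definition quot_ops :: "('f \<Rightarrow> 'a list \<Rightarrow> 'a) \<Rightarrow> 'a rel \<Rightarrow> 'f \<Rightarrow> 'a set list \<Rightarrow> 'a set" where
  "quot_ops F \<theta> f Cs = \<theta> `` {F f (map rep Cs)}"

definition is_trace :: "'a set \<Rightarrow> 'a rel \<Rightarrow> ('a \<Rightarrow> 'a) \<Rightarrow> bool" where
  "is_trace S \<alpha> r \<longleftrightarrow> (\<forall>x\<in>S. (r x, x) \<in> \<alpha>) \<and> (\<forall>x y. (x, y) \<in> \<alpha> \<longrightarrow> r x = r y)"

definition app3 :: "('f \<Rightarrow> 'a list \<Rightarrow> 'a) \<Rightarrow> ('f, nat) trm \<Rightarrow> 'a \<Rightarrow> 'a \<Rightarrow> 'a \<Rightarrow> 'a" where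
  "app3 F d a b c = eval F (\<lambda>i. if i = 0 then a else if i = 1 then b else c) d"

definition is_diff_term :: "('f \<Rightarrow> nat) \<Rightarrow> 'a set \<Rightarrow> ('f \<Rightarrow> 'a list \<Rightarrow> 'a) \<Rightarrow> ('f, nat) trm \<Rightarrow> bool" where
  "is_diff_term ar S F d \<longleftrightarrow>
     (\<forall>\<theta>. congruence ar S F \<theta> \<longrightarrow>
        (\<forall>(a, b) \<in> \<theta>. app3 F d a a b = b \<and> (app3 F d a b b, a) \<in> commutator ar S F \<theta> \<theta>))"

text \<open>Satisfaction of a set of identities; the variety is Mod(E).\<close>
definition models :: "('f \<Rightarrow> nat) \<Rightarrow> 'a set \<Rightarrow> ('f \<Rightarrow> 'a list \<Rightarrow> 'a) \<Rightarrow> (('f, nat) trm \<times> ('f, nat) trm) set \<Rightarrow> bool" where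
  "models ar S F E \<longleftrightarrow> (\<forall>(s, t) \<in> E. \<forall>\<rho>. (\<forall>i. \<rho> i \<in> S) \<longrightarrow> eval F \<rho> s = eval F \<rho> t)"

text \<open>d is a difference term for all members of the variety Mod(E) whose carrier lives in type 'b.\<close>
definition diff_term_variety :: "('f \<Rightarrow> nat) \<Rightarrow> (('f, nat) trm \<times> ('f, nat) trm) set \<Rightarrow> ('f, nat) trm \<Rightarrow> 'b itself \<Rightarrow> bool" where
  "diff_term_variety ar E d _ \<longleftrightarrow> wf_trm ar d \<and> tvars d \<subseteq> {0, 1, 2} \<and>
     (\<forall>(S :: 'b set) F. is_alg ar S F \<and> models ar S F E \<longrightarrow> is_diff_term ar S F d)"

definition tensor_ops :: "('f \<Rightarrow> 'b list \<Rightarrow> 'b) \<Rightarrow> ('f \<Rightarrow> 'q list \<Rightarrow> 'q) \<Rightarrow> ('b \<Rightarrow> 'b \<Rightarrow> 'b)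
     \<Rightarrow> ('f \<Rightarrow> 'q list \<Rightarrow> 'b) \<Rightarrow> 'f \<Rightarrow> ('b \<times> 'q) list \<Rightarrow> 'b \<times> 'q" where
  "tensor_ops FB FQ add T f ps =
     (add (FB f (map fst ps)) (T f (map snd ps)), FQ f (map snd ps))"

definition hom :: "('f \<Rightarrow> nat) \<Rightarrow> 'a set \<Rightarrow> ('f \<Rightarrow> 'a list \<Rightarrow> 'a) \<Rightarrow> ('f \<Rightarrow> 'b list \<Rightarrow> 'b) \<Rightarrow> ('a \<Rightarrow> 'b) \<Rightarrow> bool" where
  "hom ar S F F' h \<longleftrightarrow> (\<forall>f xs. length xs = ar f \<longrightarrow> set xs \<subseteq> S \<longrightarrow> h (F f xs) = F' f (map h xs))"

definition isomorphic :: "('f \<Rightarrow> nat) \<Rightarrow> 'a set \<Rightarrow> ('f \<Rightarrow> 'a list \<Rightarrow> 'a) \<Rightarrow> 'b set \<Rightarrow> ('f \<Rightarrow> 'b list \<Rightarrow> 'b) \<Rightarrow> bool" where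
  "isomorphic ar S F S' F' \<longleftrightarrow> (\<exists>h. bij_betw h S S' \<and> hom ar S F F' h)"

end

theory Submission
  imports Defs
begin

lemma eval_closed:
  assumes "is_alg ar S F" "wf_trm ar t" "\<And>v. \<rho> v \<in> S"
  shows "eval F \<rho> t \<in> S"
  using assms(2)
proof (induction t)
  case (Var v) then show ?case using assms(3) by simp
next
  case (App f ts)
  then have "set (map (eval F \<rho>) ts) \<subseteq> S" "length (map (eval F \<rho>) ts) = ar f" by auto
  then show ?case using assms(1) unfolding is_alg_def by simp
qed

lemma eval_compat:
  assumes "compatible ar F \<theta>" "wf_trm ar t" "\<And>v. (\<rho> v, \<rho>' v) \<in> \<theta>"
  shows "(eval F \<rho> t, eval F \<rho>' t) \<in> \<theta>"
  using assms(2)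
proof (induction t)
  case (Var v) then show ?case using assms(3) by simp
next
  case (App f ts)
  have "list_all2 (\<lambda>x y. (x, y) \<in> \<theta>) (map (eval F \<rho>) ts) (map (eval F \<rho>') ts)"
    using App by (auto simp: list_all2_map1 list_all2_map2 list_all2_same)
  then show ?case using assms(1) App.prems unfolding compatible_def by auto
qed

lemma eval_pair: "eval (pair_ops F) \<rho> t = (eval F (fst \<circ> \<rho>) t, eval F (snd \<circ> \<rho>) t)"
proof (induction t)
  case (Var v) then show ?case by simp
next
  case (App f ts)
  have 1: "map fst (map (eval (pair_ops F) \<rho>) ts) = map (eval F (fst \<circ> \<rho>)) ts"
    using App by (auto simp: comp_def)
  have 2: "map snd (map (eval (pair_ops F) \<rho>) ts) = map (eval F (snd \<circ> \<rho>)) ts"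
    using App by (auto simp: comp_def)
  have 3: "eval (pair_ops F) \<rho> (App f ts) = pair_ops F f (map (eval (pair_ops F) \<rho>) ts)" by simp
  show ?case unfolding 3 pair_ops_def[of F f] 1 2 by (simp add: comp_def)
qed

fun tsubst :: "('v \<Rightarrow> ('f,'w) trm) \<Rightarrow> ('f,'v) trm \<Rightarrow> ('f,'w) trm" where
  "tsubst \<sigma> (Var v) = \<sigma> v"
| "tsubst \<sigma> (App f ts) = App f (map (tsubst \<sigma>) ts)"

lemma eval_tsubst: "eval F \<rho> (tsubst \<sigma> t) = eval F (\<lambda>v. eval F \<rho> (\<sigma> v)) t"
proof (induction t)
  case (Var v) then show ?case by simp
next
  case (App f ts)
  have "map (eval F \<rho>) (map (tsubst \<sigma>) ts) = map (eval F (\<lambda>v. eval F \<rho> (\<sigma> v))) ts"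
    unfolding map_map by (rule map_cong) (use App in auto)
  then show ?case by (simp del: map_map)
qed

lemma wf_tsubst: "wf_trm ar t \<Longrightarrow> (\<And>v. wf_trm ar (\<sigma> v)) \<Longrightarrow> wf_trm ar (tsubst \<sigma> t)"
  by (induction t) auto

definition dapp :: "('f, nat) trm \<Rightarrow> ('f,'w) trm \<Rightarrow> ('f,'w) trm \<Rightarrow> ('f,'w) trm \<Rightarrow> ('f,'w) trm" where
  "dapp d s1 s2 s3 = tsubst (\<lambda>i. if i = 0 then s1 else if i = 1 then s2 else s3) d"

lemma eval_dapp: "eval F \<rho> (dapp d s1 s2 s3) = app3 F d (eval F \<rho> s1) (eval F \<rho> s2) (eval F \<rho> s3)"
proof -
  have "(\<lambda>v. eval F \<rho> (if v = 0 then s1 else if v = 1 then s2 else s3)) =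
        (\<lambda>i. if i = 0 then eval F \<rho> s1 else if i = 1 then eval F \<rho> s2 else eval F \<rho> s3)"
    by auto
  then show ?thesis unfolding dapp_def app3_def eval_tsubst by (rule arg_cong[where f="\<lambda>\<rho>. eval F \<rho> d"])
qed

lemma wf_dapp: "wf_trm ar d \<Longrightarrow> wf_trm ar s1 \<Longrightarrow> wf_trm ar s2 \<Longrightarrow> wf_trm ar s3 \<Longrightarrow> wf_trm ar (dapp d s1 s2 s3)"
  unfolding dapp_def by (rule wf_tsubst) auto

lemma app3_closed: "is_alg ar S F \<Longrightarrow> wf_trm ar d \<Longrightarrow> a \<in> S \<Longrightarrow> b \<in> S \<Longrightarrow> c \<in> S \<Longrightarrow> app3 F d a b c \<in> S"
  unfolding app3_def by (rule eval_closed) auto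

lemma app3_compat: "compatible ar F \<theta> \<Longrightarrow> wf_trm ar d \<Longrightarrow> (a, a') \<in> \<theta> \<Longrightarrow> (b, b') \<in> \<theta> \<Longrightarrow> (c, c') \<in> \<theta>
  \<Longrightarrow> (app3 F d a b c, app3 F d a' b' c') \<in> \<theta>"
  unfolding app3_def by (rule eval_compat) auto

lemma app3_pair: "app3 (pair_ops F) d (a1, b1) (a2, b2) (a3, b3) = (app3 F d a1 a2 a3, app3 F d b1 b2 b3)"
proof -
  have 1: "fst \<circ> (\<lambda>i. if i = 0 then (a1, b1) else if i = 1 then (a2, b2) else (a3, b3)) = (\<lambda>i. if i = 0 then a1 else if i = 1 then a2 else a3)"
    by auto
  have 2: "snd \<circ> (\<lambda>i. if i = 0 then (a1, b1) else if i = 1 then (a2, b2) else (a3, b3)) = (\<lambda>i. if i = 0 then b1 else if i = 1 then b2 else b3)"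
    by auto
  show ?thesis unfolding app3_def eval_pair 1 2 ..
qed

lemma rep_rel: "equiv C \<theta> \<Longrightarrow> x \<in> C \<Longrightarrow> (x, rep (\<theta> `` {x})) \<in> \<theta>"
  unfolding rep_def by (metis Image_singleton_iff equiv_class_self someI_ex)

lemma quot_classes:
  assumes "congruence ar C G \<theta>" "length xs = ar f" "set xs \<subseteq> C"
  shows "quot_ops G \<theta> f (map (\<lambda>x. \<theta> `` {x}) xs) = \<theta> `` {G f xs}"
proof -
  have eq: "equiv C \<theta>" and cp: "compatible ar G \<theta>" using assms(1) unfolding congruence_def by auto
  have "list_all2 (\<lambda>x y. (x, y) \<in> \<theta>) xs (map rep (map (\<lambda>x. \<theta> `` {x}) xs))"
    using assms(3) rep_rel[OF eq] by (auto simp: list_all2_map2 list_all2_same)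
  then have "(G f xs, G f (map rep (map (\<lambda>x. \<theta> `` {x}) xs))) \<in> \<theta>"
    using cp assms(2) unfolding compatible_def by blast
  then show ?thesis unfolding quot_ops_def using eq equiv_class_eq_iff by metis
qed

lemma eval_quot:
  assumes alg: "is_alg ar C G" and cg: "congruence ar C G \<theta>" and wf: "wf_trm ar t"
    and \<rho>: "\<And>v. \<rho> v \<in> C"
  shows "eval (quot_ops G \<theta>) (\<lambda>v. \<theta> `` {\<rho> v}) t = \<theta> `` {eval G \<rho> t}"
  using wf
proof (induction t)
  case (Var v) then show ?case by simp
next
  case (App f ts)
  have m: "map (eval (quot_ops G \<theta>) (\<lambda>v. \<theta> `` {\<rho> v})) ts = map (\<lambda>x. \<theta> `` {x}) (map (eval G \<rho>) ts)"
    using App by auto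
  have s: "set (map (eval G \<rho>) ts) \<subseteq> C"
    using App.prems by (auto intro: eval_closed[OF alg] \<rho>)
  show ?case unfolding eval.simps m by (rule quot_classes[OF cg]) (use App.prems s in auto)
qed

lemma app3_quot:
  assumes alg: "is_alg ar C G" and cg: "congruence ar C G \<theta>" and wf: "wf_trm ar d"
    and "a \<in> C" "b \<in> C" "c \<in> C"
  shows "app3 (quot_ops G \<theta>) d (\<theta> `` {a}) (\<theta> `` {b}) (\<theta> `` {c}) = \<theta> `` {app3 G d a b c}"
proof -
  have 1: "(\<lambda>i. if i = 0 then \<theta> `` {a} else if i = 1 then \<theta> `` {b} else \<theta> `` {c}) =
        (\<lambda>v. \<theta> `` {(\<lambda>i. if i = 0 then a else if i = 1 then b else c) v})" by (rule ext) simp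
  show ?thesis unfolding app3_def 1 by (rule eval_quot[OF alg cg wf]) (use assms in auto)
qed

lemma Cg_congruence:
  assumes "congruence ar C G \<theta>0" "R \<subseteq> \<theta>0"
  shows "congruence ar C G (Cg ar C G R)" "R \<subseteq> Cg ar C G R"
proof -
  let ?X = "{\<theta>. congruence ar C G \<theta> \<and> R \<subseteq> \<theta>}"
  have ne: "\<theta>0 \<in> ?X" using assms by auto
  have eqs: "\<And>\<theta>. \<theta> \<in> ?X \<Longrightarrow> equiv C \<theta>" by (auto simp: congruence_def)
  have "equiv C (\<Inter> ?X)"
    unfolding equiv_def refl_on_def sym_def trans_def
  proof (intro conjI allI impI ballI)
    show "\<Inter> ?X \<subseteq> C \<times> C" using ne eqs[OF ne] unfolding equiv_def refl_on_def by blast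
    fix x assume "x \<in> C" then show "(x, x) \<in> \<Inter> ?X" using eqs unfolding equiv_def refl_on_def by blast
  next
    fix x y assume "(x, y) \<in> \<Inter> ?X" then show "(y, x) \<in> \<Inter> ?X" using eqs unfolding equiv_def sym_def by blast
  next
    fix x y z assume "(x, y) \<in> \<Inter> ?X" "(y, z) \<in> \<Inter> ?X" then show "(x, z) \<in> \<Inter> ?X" using eqs unfolding equiv_def trans_def by blast
  qed
  moreover have "compatible ar G (\<Inter> ?X)"
    unfolding compatible_def
  proof (intro allI impI)
    fix f xs ys assume l: "length xs = ar f" and r: "list_all2 (\<lambda>x y. (x, y) \<in> \<Inter> ?X) xs ys"
    show "(G f xs, G f ys) \<in> \<Inter> ?X"
    proof
      fix \<theta> assume th: "\<theta> \<in> ?X"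
      have "list_all2 (\<lambda>x y. (x, y) \<in> \<theta>) xs ys" using r th by (auto elim: list_all2_mono)
      then show "(G f xs, G f ys) \<in> \<theta>" using th l by (auto simp: congruence_def compatible_def)
    qed
  qed
  ultimately show "congruence ar C G (Cg ar C G R)" unfolding Cg_def congruence_def by simp
  show "R \<subseteq> Cg ar C G R" unfolding Cg_def by auto
qed


theorem corollary2p5:
  fixes ar :: "'f \<Rightarrow> nat"
    and E :: "(('f, nat) trm \<times> ('f, nat) trm) set"
    and d :: "('f, nat) trm"
    and S :: "'a set" and F :: "'f \<Rightarrow> 'a list \<Rightarrow> 'a"
    and \<alpha> :: "'a rel" and r :: "'a \<Rightarrow> 'a"
  assumes dV1: "diff_term_variety ar E d TYPE('a)"
    and dV2: "diff_term_variety ar E d TYPE('a \<times> 'a)"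
    and dV3: "diff_term_variety ar E d TYPE(('a \<times> 'a) set)"
    and A: "is_alg ar S F" and AV: "models ar S F E"
    and \<alpha>: "congruence ar S F \<alpha>"
    and central: "commutator ar S F \<alpha> (S \<times> S) = Id_on S"
    and r: "is_trace S \<alpha> r"
  shows "let \<Delta> = Delta ar S F \<alpha> (S \<times> S);
             FB = quot_ops (pair_ops F) \<Delta>;
             zero = \<Delta> `` Id_on S;
             addB = (\<lambda>x y. app3 FB d x zero y);
             T = (\<lambda>f Qs. \<Delta> `` {(r (F f (map rep Qs)), F f (map (r \<circ> rep) Qs))})
         in isomorphic ar S F ((\<alpha> // \<Delta>) \<times> (S // \<alpha>)) (tensor_ops FB (quot_ops F \<alpha>) addB T)"
proof -
  have eqa: "equiv S \<alpha>" and cpa: "compatible ar F \<alpha>" using \<alpha> unfolding congruence_def by auto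
  have aS: "\<And>x y. (x,y) \<in> \<alpha> \<Longrightarrow> x \<in> S \<and> y \<in> S" using eqa unfolding equiv_def refl_on_def by blast
  have arefl: "\<And>x. x \<in> S \<Longrightarrow> (x,x) \<in> \<alpha>" using eqa unfolding equiv_def refl_on_def by blast
  have asym: "\<And>x y. (x,y) \<in> \<alpha> \<Longrightarrow> (y,x) \<in> \<alpha>" using eqa unfolding equiv_def sym_def by blast
  have atrans: "\<And>x y z. (x,y) \<in> \<alpha> \<Longrightarrow> (y,z) \<in> \<alpha> \<Longrightarrow> (x,z) \<in> \<alpha>" using eqa unfolding equiv_def trans_def by blast
  have rS: "\<And>x. x \<in> S \<Longrightarrow> (r x, x) \<in> \<alpha>" and req: "\<And>x y. (x,y) \<in> \<alpha> \<Longrightarrow> r x = r y"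
    using r unfolding is_trace_def by auto
  have wfd: "wf_trm ar d" and dS: "is_diff_term ar S F d"
    using dV1 A AV unfolding diff_term_variety_def by auto
  define D where "D = app3 F d"
  have Dcl: "\<And>a b c. a \<in> S \<Longrightarrow> b \<in> S \<Longrightarrow> c \<in> S \<Longrightarrow> D a b c \<in> S"
    unfolding D_def using app3_closed[OF A wfd] .
  have Dcp: "\<And>a a' b b' c c'. (a,a') \<in> \<alpha> \<Longrightarrow> (b,b') \<in> \<alpha> \<Longrightarrow> (c,c') \<in> \<alpha> \<Longrightarrow> (D a b c, D a' b' c') \<in> \<alpha>"
    unfolding D_def using app3_compat[OF cpa wfd] .
  have SScong: "congruence ar S F (S \<times> S)"
    unfolding congruence_def compatible_def
  proof (intro conjI allI impI)
    show "equiv S (S \<times> S)" by (auto simp: equiv_def refl_on_def sym_def trans_def)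
    fix f xs ys assume l: "length xs = ar f" and rr: "list_all2 (\<lambda>x y. (x,y) \<in> S \<times> S) xs ys"
    have "set xs \<subseteq> S" "set ys \<subseteq> S" "length ys = ar f" using rr l
      by (auto simp: list_all2_conv_all_nth in_set_conv_nth)
    then show "(F f xs, F f ys) \<in> S \<times> S" using A l unfolding is_alg_def by auto
  qed
  have Dl: "\<And>a b. a \<in> S \<Longrightarrow> b \<in> S \<Longrightarrow> D a a b = b"
    using dS SScong unfolding is_diff_term_def D_def by blast
  have comm_sub: "commutator ar S F \<alpha> \<alpha> \<subseteq> Id_on S"
  proof -
    have "{\<delta>. congruence ar S F \<delta> \<and> term_cond ar F \<alpha> (S\<times>S) \<delta>} \<subseteq> {\<delta>. congruence ar S F \<delta> \<and> term_cond ar F \<alpha> \<alpha> \<delta>}"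
    proof (intro subsetI CollectI conjI)
      fix \<delta> assume "\<delta> \<in> {\<delta>. congruence ar S F \<delta> \<and> term_cond ar F \<alpha> (S\<times>S) \<delta>}"
      then have c: "congruence ar S F \<delta>" and tc: "term_cond ar F \<alpha> (S\<times>S) \<delta>" by auto
      show "congruence ar S F \<delta>" by (rule c)
      show "term_cond ar F \<alpha> \<alpha> \<delta>" unfolding term_cond_def
      proof (intro allI impI)
        fix t :: "('f, nat + nat) trm" and a b u v
        assume "wf_trm ar t" "\<forall>i. (a i, b i) \<in> \<alpha>" "\<forall>i. (u i, v i) \<in> \<alpha>"
          "(eval F (case_sum a u) t, eval F (case_sum a v) t) \<in> \<delta>"
        moreover have "\<forall>i. (u i, v i) \<in> S \<times> S" using aS \<open>\<forall>i. (u i, v i) \<in> \<alpha>\<close> by blast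
        ultimately show "(eval F (case_sum b u) t, eval F (case_sum b v) t) \<in> \<delta>"
          using tc unfolding term_cond_def by blast
      qed
    qed
    then show ?thesis using central unfolding commutator_def by blast
  qed
  have Dr: "\<And>a b. (a,b) \<in> \<alpha> \<Longrightarrow> D a b b = a"
  proof -
    fix a b assume "(a,b) \<in> \<alpha>"
    then have "(D a b b, a) \<in> commutator ar S F \<alpha> \<alpha>" using dS \<alpha> unfolding is_diff_term_def D_def by blast
    then show "D a b b = a" using comm_sub by auto
  qed
  have TC: "\<And>(t :: ('f, nat + nat) trm) XA XB U V. wf_trm ar t \<Longrightarrow> (\<And>i. (XA i, XB i) \<in> \<alpha>) \<Longrightarrow> (\<And>i. U i \<in> S) \<Longrightarrow> (\<And>i. V i \<in> S) \<Longrightarrow>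
     eval F (case_sum XA U) t = eval F (case_sum XA V) t \<Longrightarrow> eval F (case_sum XB U) t = eval F (case_sum XB V) t"
  proof -
    fix t :: "('f, nat + nat) trm" and XA XB U V
    assume wt: "wf_trm ar t" and ab: "\<And>i. (XA i, XB i) \<in> \<alpha>" and US: "\<And>i. U i \<in> S" and VS: "\<And>i. V i \<in> S"
      and e: "eval F (case_sum XA U) t = eval F (case_sum XA V) t"
    let ?X = "{\<delta>. congruence ar S F \<delta> \<and> term_cond ar F \<alpha> (S \<times> S) \<delta>}"
    have "eval F (case_sum XA U) t \<in> S"
      by (rule eval_closed[OF A wt]) (use ab aS US in \<open>auto split: sum.split\<close>)
    then have "(eval F (case_sum XA U) t, eval F (case_sum XA V) t) \<in> \<Inter> ?X"
      using central e unfolding commutator_def by auto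
    have "(eval F (case_sum XB U) t, eval F (case_sum XB V) t) \<in> \<Inter> ?X"
    proof
      fix \<delta> assume "\<delta> \<in> ?X"
      moreover have "(eval F (case_sum XA U) t, eval F (case_sum XA V) t) \<in> \<delta>"
        using \<open>_ \<in> \<Inter> ?X\<close> calculation by blast
      ultimately show "(eval F (case_sum XB U) t, eval F (case_sum XB V) t) \<in> \<delta>"
        unfolding term_cond_def using wt ab US VS by blast
    qed
    then show "eval F (case_sum XB U) t = eval F (case_sum XB V) t"
      using central unfolding commutator_def by auto
  qed
  have L1: "\<And>(t :: ('f, nat + nat) trm) (a :: nat \<Rightarrow> 'a) (b :: nat \<Rightarrow> 'a) (c :: nat \<Rightarrow> 'a) (e :: nat \<Rightarrow> 'a). wf_trm ar t \<Longrightarrow> (\<And>i. (a i, b i) \<in> \<alpha>) \<Longrightarrow> (\<And>j. c j \<in> S) \<Longrightarrow> (\<And>j. e j \<in> S) \<Longrightarrow>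
     D (eval F (case_sum a c) t) (eval F (case_sum b c) t) (eval F (case_sum b e) t) = eval F (case_sum a e) t"
  proof -
    fix t :: "('f, nat + nat) trm" and a b c e :: "nat \<Rightarrow> 'a"
    assume wt: "wf_trm ar t" and ab: "\<And>i. (a i, b i) \<in> \<alpha>" and cS: "\<And>j. c j \<in> S" and eS: "\<And>j. e j \<in> S"
    define rn where "rn = (\<lambda>(g::nat\<Rightarrow>nat) (h::nat\<Rightarrow>nat). tsubst (\<lambda>v. Var (map_sum g h v)) t)"
    have ev_rn: "\<And>X Y g h. eval F (case_sum X Y) (rn g h) = eval F (case_sum (X \<circ> g) (Y \<circ> h)) t"
    proof -
      fix X Y and g h :: "nat \<Rightarrow> nat"
      have "(\<lambda>v. eval F (case_sum X Y) (Var (map_sum g h v))) = case_sum (X \<circ> g) (Y \<circ> h)"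
        by (rule ext) (simp split: sum.split)
      then show "eval F (case_sum X Y) (rn g h) = eval F (case_sum (X \<circ> g) (Y \<circ> h)) t"
        unfolding rn_def eval_tsubst by simp
    qed
    have wrn: "\<And>g h. wf_trm ar (rn g h)" unfolding rn_def by (rule wf_tsubst[OF wt]) simp
    define t' where "t' = dapp d (rn (\<lambda>i. 2*i) (\<lambda>j. 2*j)) (rn (\<lambda>i. 2*i+1) (\<lambda>j. 2*j)) (rn (\<lambda>i. 2*i+1) (\<lambda>j. 2*j+1))"
    define XA where "XA = (\<lambda>i::nat. b (i div 2))"
    define XB where "XB = (\<lambda>i::nat. if even i then a (i div 2) else b (i div 2))"
    define U where "U = (\<lambda>j::nat. if even j then c (j div 2) else e (j div 2))"
    define V where "V = (\<lambda>j::nat. e (j div 2))"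
    have c1: "XA \<circ> (\<lambda>i. 2*i) = b" "XA \<circ> (\<lambda>i. 2*i+1) = b" "XB \<circ> (\<lambda>i. 2*i) = a" "XB \<circ> (\<lambda>i. 2*i+1) = b"
       "U \<circ> (\<lambda>j. 2*j) = c" "U \<circ> (\<lambda>j. 2*j+1) = e" "V \<circ> (\<lambda>j. 2*j) = e" "V \<circ> (\<lambda>j. 2*j+1) = e"
      by (auto simp: XA_def XB_def U_def V_def)
    have aS': "\<And>i. a i \<in> S" and bS: "\<And>i. b i \<in> S" using ab aS by blast+
    have evS: "\<And>(x::nat\<Rightarrow>'a) (y::nat\<Rightarrow>'a). (\<And>i. x i \<in> S) \<Longrightarrow> (\<And>j. y j \<in> S) \<Longrightarrow> eval F (case_sum x y) t \<in> S"
    proof -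
      fix x y :: "nat \<Rightarrow> 'a" assume "\<And>i. x i \<in> S" "\<And>j. y j \<in> S"
      then show "eval F (case_sum x y) t \<in> S" by (intro eval_closed[OF A wt]) (simp split: sum.split)
    qed
    have wt': "wf_trm ar t'" unfolding t'_def by (intro wf_dapp wfd wrn)
    have "eval F (case_sum XA U) t' = D (eval F (case_sum b c) t) (eval F (case_sum b c) t) (eval F (case_sum b e) t)"
      unfolding t'_def eval_dapp ev_rn c1 D_def ..
    also have "\<dots> = eval F (case_sum b e) t" using Dl evS bS cS eS by blast
    finally have 1: "eval F (case_sum XA U) t' = eval F (case_sum b e) t" .
    have "eval F (case_sum XA V) t' = D (eval F (case_sum b e) t) (eval F (case_sum b e) t) (eval F (case_sum b e) t)"
      unfolding t'_def eval_dapp ev_rn c1 D_def ..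
    also have "\<dots> = eval F (case_sum b e) t" using Dl evS bS cS eS by blast
    finally have 2: "eval F (case_sum XA V) t' = eval F (case_sum b e) t" .
    have "eval F (case_sum XB U) t' = eval F (case_sum XB V) t'"
    proof (rule TC[OF wt'])
      fix i show "(XA i, XB i) \<in> \<alpha>" unfolding XA_def XB_def using ab asym arefl bS by auto
    next
      fix i show "U i \<in> S" unfolding U_def using cS eS by auto
    next
      fix i show "V i \<in> S" unfolding V_def using eS by auto
    qed (use 1 2 in simp)
    moreover have "eval F (case_sum XB U) t' = D (eval F (case_sum a c) t) (eval F (case_sum b c) t) (eval F (case_sum b e) t)"
      unfolding t'_def eval_dapp ev_rn c1 D_def ..
    moreover have "eval F (case_sum XB V) t' = D (eval F (case_sum a e) t) (eval F (case_sum b e) t) (eval F (case_sum b e) t)"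
      unfolding t'_def eval_dapp ev_rn c1 D_def ..
    moreover have "(eval F (case_sum a e) t, eval F (case_sum b e) t) \<in> \<alpha>"
      by (rule eval_compat[OF cpa wt]) (use ab arefl eS in \<open>simp split: sum.split\<close>)
    ultimately show "D (eval F (case_sum a c) t) (eval F (case_sum b c) t) (eval F (case_sum b e) t) = eval F (case_sum a e) t"
      using Dr by simp
  qed
  have Affd: "\<And>p p' c1 c2 e1 e2. (p,p') \<in> \<alpha> \<Longrightarrow> c1 \<in> S \<Longrightarrow> c2 \<in> S \<Longrightarrow> e1 \<in> S \<Longrightarrow> e2 \<in> S \<Longrightarrow>
      D (D p c1 c2) (D p' c1 c2) (D p' e1 e2) = D p e1 e2"
  proof -
    fix p p' c1 c2 e1 e2 assume pp: "(p,p') \<in> \<alpha>" and S4: "c1 \<in> S" "c2 \<in> S" "e1 \<in> S" "e2 \<in> S"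
    define tt where "tt = (dapp d (Var (Inl 0)) (Var (Inr 0)) (Var (Inr 1)) :: ('f, nat+nat) trm)"
    have ev: "\<And>x y. eval F (case_sum x y) tt = D (x 0) (y 0) (y 1)" unfolding tt_def eval_dapp D_def by simp
    have "wf_trm ar tt" unfolding tt_def by (rule wf_dapp[OF wfd]) auto
    from L1[OF this, of "\<lambda>_. p" "\<lambda>_. p'" "\<lambda>j. if j = 0 then c1 else c2" "\<lambda>j. if j = 0 then e1 else e2"]
    show "D (D p c1 c2) (D p' c1 c2) (D p' e1 e2) = D p e1 e2" using ev pp S4 by simp
  qed
  have AffF: "\<And>f bs as as'. length bs = ar f \<Longrightarrow> length as = ar f \<Longrightarrow> length as' = ar f \<Longrightarrow>
      (\<And>i. i < ar f \<Longrightarrow> (bs!i, as!i) \<in> \<alpha>) \<Longrightarrow> set as' \<subseteq> S \<Longrightarrow>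
      F f (map (\<lambda>i. D (bs!i) (as!i) (as'!i)) [0..<ar f]) = D (F f bs) (F f as) (F f as')"
  proof -
    fix f bs as as' assume lb: "length bs = ar f" and la: "length as = ar f" and la': "length as' = ar f"
      and ba: "\<And>i. i < ar f \<Longrightarrow> (bs!i, as!i) \<in> \<alpha>" and s': "set as' \<subseteq> S"
    define n where "n = ar f"
    have asS: "set as \<subseteq> S" using ba aS la by (metis in_set_conv_nth subsetI)
    have bsS: "set bs \<subseteq> S" using ba aS lb by (metis in_set_conv_nth subsetI)
    have s0: "F f as \<in> S" using A la asS unfolding is_alg_def by blast
    define s0 where "s0 = F f as"
    define t where "t = (App f (map (\<lambda>i. dapp d (Var (Inl i)) (Var (Inr (2*i))) (Var (Inr (2*i+1)))) [0..<n]) :: ('f,nat+nat) trm)"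
    define xa where "xa = (\<lambda>i. if i < n then bs!i else s0)"
    define xb where "xb = (\<lambda>i. if i < n then as!i else s0)"
    define yc where "yc = (\<lambda>j. if j div 2 < n then as!(j div 2) else s0)"
    define ye where "ye = (\<lambda>j. if j div 2 < n then (if even j then as!(j div 2) else as'!(j div 2)) else s0)"
    have evt: "\<And>x y. eval F (case_sum x y) t = F f (map (\<lambda>i. D (x i) (y (2*i)) (y (2*i+1))) [0..<n])"
      unfolding t_def by (simp add: eval_dapp D_def comp_def)
    have wt: "wf_trm ar t" unfolding t_def n_def by (auto intro!: wf_dapp wfd)
    have ab: "\<And>i. (xa i, xb i) \<in> \<alpha>" unfolding xa_def xb_def n_def using ba s0 arefl s0_def by auto
    have yS: "\<And>j. yc j \<in> S" "\<And>j. ye j \<in> S" unfolding yc_def ye_def n_def using s0 s0_def asS s' la la'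
      by (auto simp: subset_iff)
    have L: "D (eval F (case_sum xa yc) t) (eval F (case_sum xb yc) t) (eval F (case_sum xb ye) t) = eval F (case_sum xa ye) t"
      by (rule L1[OF wt ab yS])
    have e1: "map (\<lambda>i. D (xa i) (yc (2*i)) (yc (2*i+1))) [0..<n] = bs"
      by (rule nth_equalityI) (auto simp: xa_def yc_def n_def lb la Dr ba)
    have e2: "map (\<lambda>i. D (xb i) (yc (2*i)) (yc (2*i+1))) [0..<n] = as"
      by (rule nth_equalityI) (use asS in \<open>auto simp: xb_def yc_def n_def lb la Dl subset_iff\<close>)
    have e3: "map (\<lambda>i. D (xb i) (ye (2*i)) (ye (2*i+1))) [0..<n] = as'"
      by (rule nth_equalityI) (use asS s' in \<open>auto simp: xb_def ye_def n_def la' la Dl subset_iff\<close>)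
    have e4: "map (\<lambda>i. D (xa i) (ye (2*i)) (ye (2*i+1))) [0..<n] = map (\<lambda>i. D (bs!i) (as!i) (as'!i)) [0..<ar f]"
      by (rule map_cong) (auto simp: xa_def ye_def n_def)
    show "F f (map (\<lambda>i. D (bs!i) (as!i) (as'!i)) [0..<ar f]) = D (F f bs) (F f as) (F f as')"
      using L unfolding evt e1 e2 e3 e4 by simp
  qed
  define \<theta> where "\<theta> = {((a,b),(a',b')). (a,b) \<in> \<alpha> \<and> (a',b') \<in> \<alpha> \<and> b' = D b a a'}"
  have pcl: "\<And>f ps. length ps = ar f \<Longrightarrow> set ps \<subseteq> \<alpha> \<Longrightarrow> pair_ops F f ps \<in> \<alpha>"
  proof -
    fix f ps assume l: "length ps = ar f" and s: "set ps \<subseteq> \<alpha>"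
    have "list_all2 (\<lambda>x y. (x,y) \<in> \<alpha>) (map fst ps) (map snd ps)"
      using s by (auto simp: list_all2_map1 list_all2_map2 list_all2_same)
    then show "pair_ops F f ps \<in> \<alpha>" using cpa l unfolding compatible_def pair_ops_def by auto
  qed
  have palg: "is_alg ar \<alpha> (pair_ops F)" unfolding is_alg_def using pcl by blast
  have thcong: "congruence ar \<alpha> (pair_ops F) \<theta>"
    unfolding congruence_def
  proof
    show "equiv \<alpha> \<theta>" unfolding equiv_def refl_on_def sym_def trans_def
    proof (intro conjI allI impI ballI)
      show "\<theta> \<subseteq> \<alpha> \<times> \<alpha>" unfolding \<theta>_def by auto
    next
      fix p assume "p \<in> \<alpha>" then show "(p, p) \<in> \<theta>" unfolding \<theta>_def using Dr asym by (cases p) auto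
    next
      fix p q assume "(p, q) \<in> \<theta>"
      then obtain a b a' b' where pq: "p = (a,b)" "q = (a',b')" "(a,b) \<in> \<alpha>" "(a',b') \<in> \<alpha>" "b' = D b a a'"
        unfolding \<theta>_def by auto
      have "D (D b a a') (D a a a') (D a a a) = D b a a" using Affd[of b a a a' a a] pq aS asym by blast
      then have "b = D b' a' a" using pq Dl Dr aS asym by auto
      then show "(q, p) \<in> \<theta>" using pq unfolding \<theta>_def by auto
    next
      fix p q w assume "(p, q) \<in> \<theta>" "(q, w) \<in> \<theta>"
      then obtain a b a' b' a'' b'' where pq: "p = (a,b)" "q = (a',b')" "w = (a'',b'')" "(a,b) \<in> \<alpha>" "(a',b') \<in> \<alpha>"
        "(a'',b'') \<in> \<alpha>" "b' = D b a a'" "b'' = D b' a' a''"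
        unfolding \<theta>_def by auto
      have "D (D b a a') (D a a a') (D a a a'') = D b a a''" using Affd[of b a a a' a a''] pq aS asym by blast
      then have "b'' = D b a a''" using pq Dl aS by auto
      then show "(p, w) \<in> \<theta>" using pq unfolding \<theta>_def by auto
    qed
    show "compatible ar (pair_ops F) \<theta>" unfolding compatible_def
    proof (intro allI impI)
      fix f ps qs assume l: "length ps = ar f" and rel: "list_all2 (\<lambda>x y. (x, y) \<in> \<theta>) ps qs"
      have lq: "length qs = ar f" using rel l by (simp add: list_all2_lengthD)
      have nth: "\<And>i. i < ar f \<Longrightarrow> (ps!i, qs!i) \<in> \<theta>" using rel l by (simp add: list_all2_conv_all_nth)
      have thsub: "\<theta> \<subseteq> \<alpha> \<times> \<alpha>" unfolding \<theta>_def by auto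
      have "\<And>i. i < ar f \<Longrightarrow> ps!i \<in> \<alpha> \<and> qs!i \<in> \<alpha>" using nth thsub by blast
      then have sp: "set ps \<subseteq> \<alpha>" and sq: "set qs \<subseteq> \<alpha>" using l lq by (metis in_set_conv_nth subsetI)+
      have sq': "set (map fst qs) \<subseteq> S" using sq aS by auto
      have nthE: "\<And>i. i < ar f \<Longrightarrow> snd (qs!i) = D (snd (ps!i)) (fst (ps!i)) (fst (qs!i)) \<and> (snd (ps!i), fst (ps!i)) \<in> \<alpha>"
      proof -
        fix i assume "i < ar f"
        from nth[OF this] show "snd (qs!i) = D (snd (ps!i)) (fst (ps!i)) (fst (qs!i)) \<and> (snd (ps!i), fst (ps!i)) \<in> \<alpha>"
          unfolding \<theta>_def using asym by (cases "ps!i", cases "qs!i") auto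
      qed
      have "map snd qs = map (\<lambda>i. D (map snd ps!i) (map fst ps!i) (map fst qs!i)) [0..<ar f]"
        by (rule nth_equalityI) (use nthE l lq in auto)
      also have "F f \<dots> = D (F f (map snd ps)) (F f (map fst ps)) (F f (map fst qs))"
        by (rule AffF) (use l lq sq' nthE in auto)
      finally show "(pair_ops F f ps, pair_ops F f qs) \<in> \<theta>"
        using pcl[OF l sp] pcl[OF lq sq] unfolding \<theta>_def pair_ops_def by auto
    qed
  qed
  define R where "R = {((u, u), (v, v)) | u v. (u, v) \<in> S \<times> S}"
  define \<Delta> where "\<Delta> = Delta ar S F \<alpha> (S \<times> S)"
  have \<Delta>def: "\<Delta> = Cg ar \<alpha> (pair_ops F) R" unfolding \<Delta>_def Delta_def R_def ..
  have aacong: "congruence ar \<alpha> (pair_ops F) (\<alpha> \<times> \<alpha>)"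
    unfolding congruence_def compatible_def
  proof (intro conjI allI impI)
    show "equiv \<alpha> (\<alpha> \<times> \<alpha>)" by (auto simp: equiv_def refl_on_def sym_def trans_def)
    fix f ps qs assume l: "length ps = ar f" and rr: "list_all2 (\<lambda>x y. (x,y) \<in> \<alpha> \<times> \<alpha>) ps qs"
    have "length qs = ar f" and nn: "\<forall>i<length qs. ps ! i \<in> \<alpha> \<and> qs ! i \<in> \<alpha>" using rr l
      by (auto simp: list_all2_conv_all_nth)
    moreover have "set ps \<subseteq> \<alpha>" "set qs \<subseteq> \<alpha>" using nn l calculation by (metis in_set_conv_nth subsetI)+
    ultimately show "(pair_ops F f ps, pair_ops F f qs) \<in> \<alpha> \<times> \<alpha>" using pcl l by auto
  qed
  have Raa: "R \<subseteq> \<alpha> \<times> \<alpha>" unfolding R_def using arefl by auto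
  have \<Delta>cong: "congruence ar \<alpha> (pair_ops F) \<Delta>" and R\<Delta>: "R \<subseteq> \<Delta>"
    unfolding \<Delta>def using Cg_congruence[OF aacong Raa] by auto
  have eqD: "equiv \<alpha> \<Delta>" and cpD: "compatible ar (pair_ops F) \<Delta>" using \<Delta>cong unfolding congruence_def by auto
  have R\<theta>: "R \<subseteq> \<theta>" unfolding R_def \<theta>_def using arefl Dl by auto
  have \<Delta>\<theta>: "\<Delta> \<subseteq> \<theta>" unfolding \<Delta>def Cg_def using thcong R\<theta> by blast
  have gen: "\<And>u v. u \<in> S \<Longrightarrow> v \<in> S \<Longrightarrow> ((u,u),(v,v)) \<in> \<Delta>" using R\<Delta> unfolding R_def by auto
  define FB where "FB = quot_ops (pair_ops F) \<Delta>"
  define zero where "zero = \<Delta> `` Id_on S"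
  define addB where "addB = (\<lambda>x y. app3 FB d x zero y)"
  define T where "T = (\<lambda>f Qs. \<Delta> `` {(r (F f (map rep Qs)), F f (map (r \<circ> rep) Qs))})"
  define h where "h = (\<lambda>x. (\<Delta> `` {(r x, x)}, \<alpha> `` {x}))"
  have zero_eq: "\<And>p. p \<in> S \<Longrightarrow> zero = \<Delta> `` {(p,p)}"
  proof -
    fix p assume pS: "p \<in> S"
    show "zero = \<Delta> `` {(p,p)}" unfolding zero_def
    proof
      show "\<Delta> `` Id_on S \<subseteq> \<Delta> `` {(p, p)}"
      proof
        fix z assume "z \<in> \<Delta> `` Id_on S"
        then obtain u where u: "u \<in> S" "((u,u), z) \<in> \<Delta>" by (auto simp: Id_on_def)
        have "((p,p),(u,u)) \<in> \<Delta>" using gen pS u by blast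
        then show "z \<in> \<Delta> `` {(p, p)}" using u eqD unfolding equiv_def trans_def by blast
      qed
      show "\<Delta> `` {(p, p)} \<subseteq> \<Delta> `` Id_on S" using pS by auto
    qed
  qed
  have hom: "hom ar S F (tensor_ops FB (quot_ops F \<alpha>) addB T) h"
    unfolding hom_def
  proof (intro allI impI)
    fix f xs assume l: "length xs = ar f" and s: "set xs \<subseteq> S"
    define y where "y = F f xs"
    define p where "p = F f (map r xs)"
    have yS: "y \<in> S" unfolding y_def using A l s unfolding is_alg_def by auto
    have "list_all2 (\<lambda>x y. (x, y) \<in> \<alpha>) (map r xs) xs"
      using s rS by (auto simp: list_all2_map1 list_all2_same)
    then have py: "(p, y) \<in> \<alpha>" unfolding p_def y_def
      using cpa l unfolding compatible_def by simp
    have pS: "p \<in> S" using py aS by blast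
    have ryS: "r y \<in> S" using rS yS aS by blast
    have m1: "map fst (map h xs) = map (\<lambda>x. \<Delta> `` {x}) (map (\<lambda>x. (r x, x)) xs)" unfolding h_def by simp
    have m2: "map snd (map h xs) = map (\<lambda>x. \<alpha> `` {x}) xs" unfolding h_def by simp
    have FBv: "FB f (map fst (map h xs)) = \<Delta> `` {(p, y)}"
      unfolding m1 FB_def
      by (subst quot_classes[OF \<Delta>cong]) (use l s rS in \<open>auto simp: pair_ops_def p_def y_def comp_def\<close>)
    have Qv: "quot_ops F \<alpha> f (map snd (map h xs)) = \<alpha> `` {y}"
      unfolding m2 y_def by (rule quot_classes[OF \<alpha> l s])
    have reps: "\<And>x. x \<in> S \<Longrightarrow> (x, rep (\<alpha> `` {x})) \<in> \<alpha>" using rep_rel[OF eqa] by blast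
    have m3: "map (r \<circ> rep) (map (\<lambda>x. \<alpha> `` {x}) xs) = map r xs"
    proof -
      have "\<And>x. x \<in> set xs \<Longrightarrow> r (rep (\<alpha> `` {x})) = r x"
      proof -
        fix x assume "x \<in> set xs"
        then have "(x, rep (\<alpha> `` {x})) \<in> \<alpha>" using s reps by blast
        then show "r (rep (\<alpha> `` {x})) = r x" by (rule req[symmetric])
      qed
      then show ?thesis by simp
    qed
    have "(y, F f (map rep (map (\<lambda>x. \<alpha> `` {x}) xs))) \<in> \<alpha>" unfolding y_def
      using cpa l s reps unfolding compatible_def by (auto simp: list_all2_map2 list_all2_same subset_iff)
    then have m4: "r (F f (map rep (map (\<lambda>x. \<alpha> `` {x}) xs))) = r y" by (rule req[symmetric])
    have Tv: "T f (map snd (map h xs)) = \<Delta> `` {(r y, p)}"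
      unfolding T_def m2 m3 m4 p_def ..
    have "addB (\<Delta> `` {(p, y)}) (\<Delta> `` {(r y, p)}) = app3 FB d (\<Delta> `` {(p, y)}) (\<Delta> `` {(p, p)}) (\<Delta> `` {(r y, p)})"
      unfolding addB_def using zero_eq pS by simp
    also have "\<dots> = \<Delta> `` {app3 (pair_ops F) d (p, y) (p, p) (r y, p)}"
      unfolding FB_def by (rule app3_quot[OF palg \<Delta>cong wfd py arefl[OF pS] atrans[OF rS[OF yS] asym[OF py]]])
    also have "app3 (pair_ops F) d (p, y) (p, p) (r y, p) = (r y, y)"
      unfolding app3_pair using Dl[of p "r y"] Dr[of y p] pS ryS py asym unfolding D_def by auto
    finally have "addB (\<Delta> `` {(p, y)}) (\<Delta> `` {(r y, p)}) = \<Delta> `` {(r y, y)}" .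
    then show "h (F f xs) = tensor_ops FB (quot_ops F \<alpha>) addB T f (map h xs)"
      unfolding tensor_ops_def FBv Tv Qv by (simp add: h_def y_def)
  qed
  have inj: "inj_on h S"
  proof (rule inj_onI)
    fix x y assume xS: "x \<in> S" and yS: "y \<in> S" and e: "h x = h y"
    have "\<alpha> `` {x} = \<alpha> `` {y}" using e unfolding h_def by simp
    then have xy: "(x,y) \<in> \<alpha>" using eq_equiv_class_iff[OF eqa xS yS] by blast
    have rxy: "r x = r y" using req[OF xy] .
    have "\<Delta> `` {(r x, x)} = \<Delta> `` {(r y, y)}" using e unfolding h_def by simp
    then have "((r x, x),(r y, y)) \<in> \<Delta>" using eq_equiv_class_iff[OF eqD rS[OF xS] rS[OF yS]] by blast
    then have "((r x, x),(r y, y)) \<in> \<theta>" using \<Delta>\<theta> by blast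
    then have "y = D x (r x) (r y)" unfolding \<theta>_def by auto
    also have "\<dots> = x" using rxy Dr[OF asym[OF rS[OF xS]]] by simp
    finally show "x = y" by simp
  qed
  have img: "h ` S = (\<alpha> // \<Delta>) \<times> (S // \<alpha>)"
  proof
    show "h ` S \<subseteq> (\<alpha> // \<Delta>) \<times> (S // \<alpha>)" using rS unfolding h_def by (auto intro: quotientI)
    show "(\<alpha> // \<Delta>) \<times> (S // \<alpha>) \<subseteq> h ` S"
    proof
      fix PQ assume "PQ \<in> (\<alpha> // \<Delta>) \<times> (S // \<alpha>)"
      then obtain P Q where PQ: "PQ = (P,Q)" "P \<in> \<alpha> // \<Delta>" "Q \<in> S // \<alpha>" by auto
      from PQ(2) obtain ab where ab: "P = \<Delta> `` {ab}" "ab \<in> \<alpha>" by (auto elim: quotientE)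
      obtain a b where abe: "ab = (a,b)" by (cases ab)
      from PQ(3) obtain z where z: "Q = \<alpha> `` {z}" "z \<in> S" by (auto elim: quotientE)
      define yy where "yy = r z"
      define x where "x = D b a yy"
      have ab\<alpha>: "(a,b) \<in> \<alpha>" using ab abe by simp
      have aS': "a \<in> S" and bS': "b \<in> S" using aS[OF ab\<alpha>] by auto
      have yyz: "(yy, z) \<in> \<alpha>" unfolding yy_def using rS[OF z(2)] .
      have yyS: "yy \<in> S" using aS[OF yyz] by simp
      have "(x, D a a yy) \<in> \<alpha>" unfolding x_def by (rule Dcp[OF asym[OF ab\<alpha>] arefl[OF aS'] arefl[OF yyS]])
      then have "(x, yy) \<in> \<alpha>" using Dl[OF aS' yyS] by simp
      then have xz: "(x, z) \<in> \<alpha>" using atrans yyz by blast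
      have xS: "x \<in> S" using aS[OF xz] by simp
      have rx: "r x = yy" using req[OF xz] yy_def by simp
      have "(app3 (pair_ops F) d (a,b) (a,a) (a,a), app3 (pair_ops F) d (a,b) (a,a) (yy,yy)) \<in> \<Delta>"
      proof (rule app3_compat[OF cpD wfd])
        show "((a,b),(a,b)) \<in> \<Delta>" using eqD ab\<alpha> unfolding equiv_def refl_on_def by blast
        show "((a,a),(a,a)) \<in> \<Delta>" using gen aS' by blast
        show "((a,a),(yy,yy)) \<in> \<Delta>" using gen aS' yyS by blast
      qed
      moreover have "app3 (pair_ops F) d (a,b) (a,a) (a,a) = (a,b)"
        unfolding app3_pair using Dl[OF aS' aS'] Dr[OF asym[OF ab\<alpha>]] unfolding D_def by simp
      moreover have "app3 (pair_ops F) d (a,b) (a,a) (yy,yy) = (yy,x)"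
        unfolding app3_pair using Dl[OF aS' yyS] unfolding D_def x_def by simp
      ultimately have "((a,b),(yy,x)) \<in> \<Delta>" by simp
      then have "\<Delta> `` {(r x, x)} = P" using rx ab abe equiv_class_eq_iff[OF eqD] by metis
      moreover have "\<alpha> `` {x} = Q" using xz z equiv_class_eq_iff[OF eqa] by metis
      ultimately show "PQ \<in> h ` S" using xS PQ unfolding h_def by auto
    qed
  qed
  have iso: "isomorphic ar S F ((\<alpha> // \<Delta>) \<times> (S // \<alpha>)) (tensor_ops FB (quot_ops F \<alpha>) addB T)"
    unfolding isomorphic_def bij_betw_def using inj img hom by blast
  then show ?thesis unfolding Let_def FB_def zero_def addB_def T_def \<Delta>_def .
qed

end
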